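(* Let $\mathcal{D}[t]\subset\mathcal{H}\subset\mathcal{D}^\times[t^\times]$ be a rigged Hilbert space, let $\{\xi_n\}$ be a Schauder basis for $\mathcal{D}[t]$, and let $\{\zeta_n\}\subset\mathcal{D}^\times$ be the sequence of coefficient functionals, i.e. the unique elements with $f=\sum_{n=1}^\infty\overline{\langle\zeta_n,f\rangle}\xi_n$ for all $f\in\mathcal{D}$. Then: (i) $\{\zeta_n\}$ is complete (its linear span is dense) in $\mathcal{D}^\times[\tau]$, where $\tau$ is any topology of the conjugate dual pair $(\mathcal{D}^\times,\mathcal{D})$ (i.e. compatible with this duality); if $\mathcal{D}[t]$ is reflexive, $\{\zeta_n\}$ is complete also with respect to $t^\times$. (ii) $\{\zeta_n\}$ is a basis for $\mathcal{D}^\times$ with respect to the weak topology: for every $\Psi\in\mathcal{D}^\times$, $$\langle\Psi,f\rangle=\sum_{k=1}^\infty\langle\Psi,\xi_k\rangle\langle\zeta_k,f\rangle,\quad\forall f\in\mathcal{D}.$$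
   Context: A rigged Hilbert space $\mathcal{D}[t]\subset\mathcal{H}\subset\mathcal{D}^\times[t^\times]$ consists of a dense subspace $\mathcal{D}$ of a Hilbert space $\mathcal{H}$ endowed with a locally convex topology $t$ finer than the topology induced by the Hilbert norm, and the space $\mathcal{D}^\times$ of all continuous conjugate-linear functionals on $\mathcal{D}[t]$, endowed with the strong dual topology $t^\times=\beta(\mathcal{D}^\times,\mathcal{D})$; $\mathcal{H}$ is identified with a subspace of $\mathcal{D}^\times$ and the duality form $\langle\Phi,f\rangle$ ($\Phi\in\mathcal{D}^\times$, $f\in\mathcal{D}$; the value of $\Phi$ at $f$) extends the inner product of $\mathcal{H}$. A Schauder basis of $\mathcal{D}[t]$ is a sequence $\{\xi_n\}$ such that every $\phi\in\mathcal{D}$ has a unique expansion $\phi=\sum c_n(\phi)\xi_n$ converging in $\mathcal{D}[t]$ with each coefficient functional $c_n$ $t$-continuous; then $c_n(f)=\overline{\langle\zeta_n,f\rangle}$ for a unique $\zeta_n\in\mathcal{D}^\times$. *)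

theory Defs
  imports "HOL-Analysis.Analysis"
begin

text \<open>A complex vector space is modelled by a type 'a :: ab_group_add together with a
  scalar multiplication sc :: complex => 'a => 'a satisfying vector_space sc.
  The Hilbert space H is the whole type 'a with inner product ip (linear in the first,
  conjugate-linear in the second argument).\<close>

definition complex_inner_product :: "(complex \<Rightarrow> 'a \<Rightarrow> 'a) \<Rightarrow> ('a::ab_group_add \<Rightarrow> 'a \<Rightarrow> complex) \<Rightarrow> bool" where
  "complex_inner_product sc ip \<longleftrightarrow>
     (\<forall>x y z. ip (x + y) z = ip x z + ip y z) \<and>
     (\<forall>c x y. ip (sc c x) y = c * ip x y) \<and>
     (\<forall>x y. ip y x = cnj (ip x y)) \<and>
     (\<forall>x. Im (ip x x) = 0 \<and> Re (ip x x) \<ge> 0) \<and>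
     (\<forall>x. ip x x = 0 \<longrightarrow> x = 0)"

definition hnorm :: "('a \<Rightarrow> 'a \<Rightarrow> complex) \<Rightarrow> 'a \<Rightarrow> real" where
  "hnorm ip x = sqrt (Re (ip x x))"

definition hilbert_space :: "(complex \<Rightarrow> 'a \<Rightarrow> 'a) \<Rightarrow> ('a::ab_group_add \<Rightarrow> 'a \<Rightarrow> complex) \<Rightarrow> bool" where
  "hilbert_space sc ip \<longleftrightarrow> vector_space sc \<and> complex_inner_product sc ip \<and>
     (\<forall>X. (\<forall>e>0. \<exists>N. \<forall>m\<ge>N. \<forall>n\<ge>N. hnorm ip (X m - X n) < e) \<longrightarrow>
          (\<exists>l. (\<lambda>n. hnorm ip (X n - l)) \<longlonglongrightarrow> 0))"

definition hnorm_open :: "('a::ab_group_add \<Rightarrow> 'a \<Rightarrow> complex) \<Rightarrow> 'a set \<Rightarrow> bool" where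
  "hnorm_open ip U \<longleftrightarrow> (\<forall>x\<in>U. \<exists>e>0. \<forall>y. hnorm ip (y - x) < e \<longrightarrow> y \<in> U)"

text \<open>Convexity and locally convex topological vector space topologies, with explicit
  operations (so that they apply both to 'a and to spaces of functionals).\<close>

definition convex_wrt :: "('b \<Rightarrow> 'b \<Rightarrow> 'b) \<Rightarrow> (complex \<Rightarrow> 'b \<Rightarrow> 'b) \<Rightarrow> 'b set \<Rightarrow> bool" where
  "convex_wrt add sc V \<longleftrightarrow>
     (\<forall>x\<in>V. \<forall>y\<in>V. \<forall>u::real. 0 \<le> u \<and> u \<le> 1 \<longrightarrow>
        add (sc (complex_of_real u) x) (sc (complex_of_real (1 - u)) y) \<in> V)"

definition lctvs :: "('b \<Rightarrow> 'b \<Rightarrow> 'b) \<Rightarrow> (complex \<Rightarrow> 'b \<Rightarrow> 'b) \<Rightarrow> 'b \<Rightarrow> 'b topology \<Rightarrow> bool" where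
  "lctvs add sc zero T \<longleftrightarrow>
     zero \<in> topspace T \<and>
     continuous_map (prod_topology T T) T (\<lambda>(x, y). add x y) \<and>
     continuous_map (prod_topology euclidean T) T (\<lambda>(c, x). sc c x) \<and>
     (\<forall>U. openin T U \<and> zero \<in> U \<longrightarrow>
        (\<exists>V. openin T V \<and> zero \<in> V \<and> V \<subseteq> U \<and> convex_wrt add sc V))"

definition tvs_bounded :: "(complex \<Rightarrow> 'b \<Rightarrow> 'b) \<Rightarrow> 'b \<Rightarrow> 'b topology \<Rightarrow> 'b set \<Rightarrow> bool" where
  "tvs_bounded sc zero T B \<longleftrightarrow> B \<subseteq> topspace T \<and>
     (\<forall>U. openin T U \<and> zero \<in> U \<longrightarrow>
        (\<exists>s>0. \<forall>r::real. r > s \<longrightarrow> B \<subseteq> sc (complex_of_real r) ` U))"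

definition unif_top :: "'x set \<Rightarrow> 'y set set \<Rightarrow> ('x \<Rightarrow> 'y \<Rightarrow> complex) \<Rightarrow> 'x topology" where
  "unif_top X BS ev = topology (\<lambda>U. U \<subseteq> X \<and>
     (\<forall>x\<in>U. \<exists>B\<in>BS. \<exists>e>0. {z\<in>X. \<forall>y\<in>B. cmod (ev z y - ev x y) < e} \<subseteq> U))"

text \<open>The conjugate dual D^x of D[t]: continuous conjugate-linear functionals on D,
  normalised to vanish outside D (so that they are determined by their values on D).
  The duality form is  <Phi, f> = Phi f.\<close>

definition cdual :: "(complex \<Rightarrow> 'a \<Rightarrow> 'a) \<Rightarrow> 'a::ab_group_add set \<Rightarrow> 'a topology \<Rightarrow> ('a \<Rightarrow> complex) set" where
  "cdual sc D t = {\<Phi>.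
     (\<forall>x\<in>D. \<forall>y\<in>D. \<Phi> (x + y) = \<Phi> x + \<Phi> y) \<and>
     (\<forall>c. \<forall>x\<in>D. \<Phi> (sc c x) = cnj c * \<Phi> x) \<and>
     continuous_map t euclidean \<Phi> \<and>
     (\<forall>x. x \<notin> D \<longrightarrow> \<Phi> x = 0)}"

definition fadd :: "('a \<Rightarrow> complex) \<Rightarrow> ('a \<Rightarrow> complex) \<Rightarrow> ('a \<Rightarrow> complex)" where
  "fadd \<Phi> \<Psi> = (\<lambda>x. \<Phi> x + \<Psi> x)"

definition fscale :: "complex \<Rightarrow> ('a \<Rightarrow> complex) \<Rightarrow> ('a \<Rightarrow> complex)" where
  "fscale c \<Phi> = (\<lambda>x. c * \<Phi> x)"

definition fzero :: "'a \<Rightarrow> complex" where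
  "fzero = (\<lambda>x. 0)"

text \<open>The strong dual topology t^x = beta(D^x, D): uniform convergence on t-bounded subsets of D.\<close>

definition strong_dual_top :: "(complex \<Rightarrow> 'a \<Rightarrow> 'a) \<Rightarrow> 'a::ab_group_add set \<Rightarrow> 'a topology \<Rightarrow> ('a \<Rightarrow> complex) topology" where
  "strong_dual_top sc D t =
     unif_top (cdual sc D t) {B. tvs_bounded sc 0 t B} (\<lambda>\<Phi> f. \<Phi> f)"

definition bidual :: "(complex \<Rightarrow> 'a \<Rightarrow> 'a) \<Rightarrow> 'a::ab_group_add set \<Rightarrow> 'a topology \<Rightarrow> (('a \<Rightarrow> complex) \<Rightarrow> complex) set" where
  "bidual sc D t = {F.
     (\<forall>\<Phi>\<in>cdual sc D t. \<forall>\<Psi>\<in>cdual sc D t. F (fadd \<Phi> \<Psi>) = F \<Phi> + F \<Psi>) \<and>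
     (\<forall>c. \<forall>\<Phi>\<in>cdual sc D t. F (fscale c \<Phi>) = c * F \<Phi>) \<and>
     continuous_map (strong_dual_top sc D t) euclidean F \<and>
     (\<forall>\<Phi>. \<Phi> \<notin> cdual sc D t \<longrightarrow> F \<Phi> = 0)}"

definition strong_bidual_top :: "(complex \<Rightarrow> 'a \<Rightarrow> 'a) \<Rightarrow> 'a::ab_group_add set \<Rightarrow> 'a topology \<Rightarrow> (('a \<Rightarrow> complex) \<Rightarrow> complex) topology" where
  "strong_bidual_top sc D t =
     unif_top (bidual sc D t) {M. tvs_bounded fscale fzero (strong_dual_top sc D t) M} (\<lambda>F \<Phi>. F \<Phi>)"

definition canon :: "(complex \<Rightarrow> 'a \<Rightarrow> 'a) \<Rightarrow> 'a::ab_group_add set \<Rightarrow> 'a topology \<Rightarrow> 'a \<Rightarrow> (('a \<Rightarrow> complex) \<Rightarrow> complex)" where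
  "canon sc D t f = (\<lambda>\<Phi>. if \<Phi> \<in> cdual sc D t then \<Phi> f else 0)"

definition reflexive_space :: "(complex \<Rightarrow> 'a \<Rightarrow> 'a) \<Rightarrow> 'a::ab_group_add set \<Rightarrow> 'a topology \<Rightarrow> bool" where
  "reflexive_space sc D t \<longleftrightarrow>
     bij_betw (canon sc D t) D (bidual sc D t) \<and>
     homeomorphic_map t (strong_bidual_top sc D t) (canon sc D t)"

text \<open>Rigged Hilbert space D[t] \<subset> H \<subset> D^x[t^x]: H = the whole type 'a is a Hilbert space,
  D a dense subspace, t a locally convex (vector space) topology on D finer than the
  topology induced by the Hilbert norm.\<close>

definition rigged_hilbert_space :: "(complex \<Rightarrow> 'a \<Rightarrow> 'a) \<Rightarrow> ('a::ab_group_add \<Rightarrow> 'a \<Rightarrow> complex) \<Rightarrow> 'a set \<Rightarrow> 'a topology \<Rightarrow> bool" where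
  "rigged_hilbert_space sc ip D t \<longleftrightarrow>
     hilbert_space sc ip \<and>
     module.subspace sc D \<and>
     (\<forall>x. \<forall>e>0. \<exists>y\<in>D. hnorm ip (x - y) < e) \<and>
     topspace t = D \<and>
     lctvs (+) sc 0 t \<and>
     (\<forall>U. hnorm_open ip U \<longrightarrow> openin t (U \<inter> D))"

text \<open>Schauder basis of D[t] (indexed from 0): unique t-convergent expansions, with
  t-continuous coefficient functionals.\<close>

definition schauder_basis :: "(complex \<Rightarrow> 'a \<Rightarrow> 'a) \<Rightarrow> 'a::ab_group_add set \<Rightarrow> 'a topology \<Rightarrow> (nat \<Rightarrow> 'a) \<Rightarrow> bool" where
  "schauder_basis sc D t \<xi> \<longleftrightarrow>
     (\<forall>n. \<xi> n \<in> D) \<and>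
     (\<forall>\<phi>\<in>D. \<exists>!c::nat \<Rightarrow> complex. limitin t (\<lambda>N. \<Sum>n<N. sc (c n) (\<xi> n)) \<phi> sequentially) \<and>
     (\<forall>n. continuous_map t euclidean
        (\<lambda>\<phi>. (THE c::nat \<Rightarrow> complex. limitin t (\<lambda>N. \<Sum>n<N. sc (c n) (\<xi> n)) \<phi> sequentially) n))"

text \<open>Topologies of the conjugate dual pair (D^x, D): locally convex vector topologies on D^x
  whose continuous linear functionals are exactly the evaluations Phi \<mapsto> <Phi, f>, f in D.\<close>

definition compatible_top :: "(complex \<Rightarrow> 'a \<Rightarrow> 'a) \<Rightarrow> 'a::ab_group_add set \<Rightarrow> 'a topology \<Rightarrow> ('a \<Rightarrow> complex) topology \<Rightarrow> bool" where
  "compatible_top sc D t \<tau> \<longleftrightarrow>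
     topspace \<tau> = cdual sc D t \<and>
     lctvs fadd fscale fzero \<tau> \<and>
     (\<forall>L :: ('a \<Rightarrow> complex) \<Rightarrow> complex.
        ((\<forall>\<Phi>\<in>cdual sc D t. \<forall>\<Psi>\<in>cdual sc D t. L (fadd \<Phi> \<Psi>) = L \<Phi> + L \<Psi>) \<and>
         (\<forall>c. \<forall>\<Phi>\<in>cdual sc D t. L (fscale c \<Phi>) = c * L \<Phi>) \<and>
         continuous_map \<tau> euclidean L)
        \<longleftrightarrow> (\<exists>f\<in>D. \<forall>\<Phi>\<in>cdual sc D t. L \<Phi> = \<Phi> f))"

definition fspan :: "(nat \<Rightarrow> 'a \<Rightarrow> complex) \<Rightarrow> ('a \<Rightarrow> complex) set" where
  "fspan \<zeta> = {\<Phi>. \<exists>N (c::nat \<Rightarrow> complex). \<Phi> = (\<lambda>x. \<Sum>n<N. c n * \<zeta> n x)}"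

end

theory Submission
  imports Defs
begin


lemma subspace_D:
  assumes "rigged_hilbert_space sc ip D t"
  shows "vector_space sc" "0 \<in> D" "\<And>x y. x \<in> D \<Longrightarrow> y \<in> D \<Longrightarrow> x + y \<in> D"
    "\<And>c x. x \<in> D \<Longrightarrow> sc c x \<in> D"
proof -
  have vs: "vector_space sc" and sub: "module.subspace sc D"
    using assms unfolding rigged_hilbert_space_def hilbert_space_def by blast+
  have "module sc" using vs unfolding vector_space_def module_def .
  then show "vector_space sc" "0 \<in> D" "\<And>x y. x \<in> D \<Longrightarrow> y \<in> D \<Longrightarrow> x + y \<in> D"
    "\<And>c x. x \<in> D \<Longrightarrow> sc c x \<in> D" using vs sub module.subspace_def by blast+
qed

lemma cdual_zero:
  assumes "\<Psi> \<in> cdual sc D t" "0 \<in> D"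
  shows "\<Psi> 0 = 0"
proof -
  have "\<Psi> (0 + 0) = \<Psi> 0 + \<Psi> 0" using assms unfolding cdual_def by blast
  then show ?thesis by simp
qed

lemma part3:
  fixes sc :: "complex \<Rightarrow> 'a::ab_group_add \<Rightarrow> 'a"
  assumes rhs: "rigged_hilbert_space sc ip D t"
    and basis: "schauder_basis sc D t \<xi>"
    and expansion: "\<forall>f\<in>D. limitin t (\<lambda>N. \<Sum>n<N. sc (cnj (\<zeta> n f)) (\<xi> n)) f sequentially"
    and \<Psi>: "\<Psi> \<in> cdual sc D t" and f: "f \<in> D"
  shows "(\<lambda>k. \<Psi> (\<xi> k) * \<zeta> k f) sums \<Psi> f"
proof -
  note sd = subspace_D[OF rhs]
  have xi: "\<And>n. \<xi> n \<in> D" using basis unfolding schauder_basis_def by blast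
  have add: "\<And>x y. x \<in> D \<Longrightarrow> y \<in> D \<Longrightarrow> \<Psi> (x + y) = \<Psi> x + \<Psi> y"
   and scl: "\<And>c x. x \<in> D \<Longrightarrow> \<Psi> (sc c x) = cnj c * \<Psi> x"
   and cont: "continuous_map t euclidean \<Psi>" using \<Psi> unfolding cdual_def by blast+
  have eq: "(\<Sum>n<N. sc (cnj (\<zeta> n f)) (\<xi> n)) \<in> D \<and>
        \<Psi> (\<Sum>n<N. sc (cnj (\<zeta> n f)) (\<xi> n)) = (\<Sum>k<N. \<Psi> (\<xi> k) * \<zeta> k f)" for N
  proof (induction N)
    case 0
    then show ?case using cdual_zero[OF \<Psi> sd(2)] sd(2) by simp
  next
    case (Suc N)
    then show ?case using sd(3,4) xi add scl by (simp add: mult.commute)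
  qed
  have "limitin euclidean (\<Psi> \<circ> (\<lambda>N. \<Sum>n<N. sc (cnj (\<zeta> n f)) (\<xi> n))) (\<Psi> f) sequentially"
    using continuous_map_limit[OF cont] expansion f by blast
  then show ?thesis unfolding sums_def using eq by (simp add: o_def)
qed



lemma fadd_apply[simp]: "fadd f g x = f x + g x" by (simp add: fadd_def)
lemma fscale_apply[simp]: "fscale c f x = c * f x" by (simp add: fscale_def)
lemma fzero_apply[simp]: "fzero x = 0" by (simp add: fzero_def)

definition rs :: "real \<Rightarrow> ('a \<Rightarrow> complex) \<Rightarrow> ('a \<Rightarrow> complex)" where
  "rs r f = fscale (complex_of_real r) f"
lemma rs_apply[simp]: "rs r f x = complex_of_real r * f x" by (simp add: rs_def)

lemma rs_rs: "rs a (rs b x) = rs (a*b) x" by (simp add: fun_eq_iff)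
lemma fadd_rs: "fadd (rs a x) (rs a y) = rs a (fadd x y)" by (simp add: fun_eq_iff distrib_left)

lemma cont_metric_crit:
  fixes f :: "'b \<Rightarrow> 'c::metric_space"
  assumes "\<And>x e. x \<in> topspace X \<Longrightarrow> e > 0 \<Longrightarrow> \<exists>U. openin X U \<and> x \<in> U \<and> (\<forall>y\<in>U. dist (f y) (f x) < e)"
  shows "continuous_map X euclidean f"
  unfolding continuous_map_def
proof (intro conjI allI impI)
  show "f \<in> topspace X \<rightarrow> topspace euclidean" by simp
  fix U :: "'c set" assume "openin euclidean U"
  then have oU: "open U" by simp
  show "openin X {x \<in> topspace X. f x \<in> U}"
  proof (rule openin_subopen[THEN iffD2], rule ballI)
    fix x assume x: "x \<in> {x \<in> topspace X. f x \<in> U}"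
    then have "f x \<in> U" by simp
    then obtain e where e: "e > 0" "ball (f x) e \<subseteq> U" using open_contains_ball[THEN iffD1, OF oU] by blast
    have "x \<in> topspace X" using x by simp
    then obtain W where W: "openin X W" "x \<in> W" "\<forall>y\<in>W. dist (f y) (f x) < e" using assms[of x e] e(1) by blast
    have "W \<subseteq> {x \<in> topspace X. f x \<in> U}"
      using W e openin_subset[OF W(1)] by (auto simp: dist_commute)
    then show "\<exists>T. openin X T \<and> x \<in> T \<and> T \<subseteq> {x \<in> topspace X. f x \<in> U}" using W by blast
  qed
qed

locale htvs =
  fixes T :: "('a \<Rightarrow> complex) topology"
  assumes zeroE: "fzero \<in> topspace T"
  and transl: "\<And>a. a \<in> topspace T \<Longrightarrow> continuous_map T T (fadd a)"
  and scal: "\<And>c. continuous_map T T (fscale c)"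
  and scal2: "\<And>x. x \<in> topspace T \<Longrightarrow> continuous_map euclidean T (\<lambda>c. fscale c x)"
  and convex: "\<And>U. openin T U \<Longrightarrow> fzero \<in> U \<Longrightarrow>
        (\<exists>V. openin T V \<and> fzero \<in> V \<and> V \<subseteq> U \<and> convex_wrt fadd fscale V)"
begin

abbreviation "E \<equiv> topspace T"

lemma addE: "x \<in> E \<Longrightarrow> y \<in> E \<Longrightarrow> fadd x y \<in> E"
  using continuous_map_funspace[OF transl[of x]] by (simp add: Pi_iff)

lemma sclE: "x \<in> E \<Longrightarrow> fscale c x \<in> E"
  using continuous_map_funspace[OF scal[of c]] by (simp add: Pi_iff)

lemma rsE: "x \<in> E \<Longrightarrow> rs c x \<in> E"
  unfolding rs_def by (rule sclE)

lemma open_pre: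
  assumes "continuous_map X T g" "openin T V"
  shows "openin X {x \<in> topspace X. g x \<in> V}"
  using assms openin_continuous_map_preimage by blast

end

context htvs begin

definition lin :: "(('a \<Rightarrow> complex) \<Rightarrow> real) \<Rightarrow> (('a \<Rightarrow> complex) \<times> real) set \<Rightarrow> bool" where
  "lin q G \<longleftrightarrow> G \<subseteq> E \<times> UNIV \<and> (\<forall>x a b. (x,a)\<in>G \<longrightarrow> (x,b)\<in>G \<longrightarrow> a = b) \<and>
     (\<forall>x a y b. (x,a)\<in>G \<longrightarrow> (y,b)\<in>G \<longrightarrow> (fadd x y, a+b)\<in>G) \<and>
     (\<forall>x a r. (x,a)\<in>G \<longrightarrow> (rs r x, r*a)\<in>G) \<and> (\<forall>x a. (x,a)\<in>G \<longrightarrow> a \<le> q x)"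

lemma linD:
  assumes "lin q G"
  shows "\<And>x a. (x,a)\<in>G \<Longrightarrow> x \<in> E"
   and "\<And>x a b. (x,a)\<in>G \<Longrightarrow> (x,b)\<in>G \<Longrightarrow> a = b"
   and "\<And>x a y b. (x,a)\<in>G \<Longrightarrow> (y,b)\<in>G \<Longrightarrow> (fadd x y, a+b)\<in>G"
   and "\<And>x a r. (x,a)\<in>G \<Longrightarrow> (rs r x, r*a)\<in>G"
   and "\<And>x a. (x,a)\<in>G \<Longrightarrow> a \<le> q x"
  using assms unfolding lin_def by blast+

lemma lin_union:
  assumes "C \<noteq> {}" "\<forall>G\<in>C. lin q G" "\<forall>G1\<in>C. \<forall>G2\<in>C. G1 \<subseteq> G2 \<or> G2 \<subseteq> G1"
  shows "lin q (\<Union>C)"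
proof -
  have two: "\<exists>G\<in>C. P \<in> G \<and> Q \<in> G" if PQ: "P \<in> \<Union>C" "Q \<in> \<Union>C" for P Q
  proof -
    obtain G1 G2 where "G1 \<in> C" "G2 \<in> C" "P \<in> G1" "Q \<in> G2" using PQ by blast
    moreover from this have "G1 \<subseteq> G2 \<or> G2 \<subseteq> G1" using assms(3) by simp
    ultimately show ?thesis by blast
  qed
  have LC: "lin q G" if "G \<in> C" for G using assms(2) that by blast
  show ?thesis unfolding lin_def
  proof (intro conjI allI impI)
    show "\<Union>C \<subseteq> E \<times> UNIV"
    proof
      fix P assume "P \<in> \<Union>C"
      then obtain G where G: "G \<in> C" "P \<in> G" by blast
      obtain x a where "P = (x,a)" by (cases P)
      then show "P \<in> E \<times> UNIV" using linD(1)[OF LC[OF G(1)]] G(2) by blast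
    qed
  next
    fix x a b assume "(x,a) \<in> \<Union>C" "(x,b) \<in> \<Union>C"
    then obtain G where G: "G \<in> C" "(x,a) \<in> G" "(x,b) \<in> G" using two by blast
    show "a = b" by (rule linD(2)[OF LC[OF G(1)] G(2,3)])
  next
    fix x a y b assume "(x,a) \<in> \<Union>C" "(y,b) \<in> \<Union>C"
    then obtain G where G: "G \<in> C" "(x,a) \<in> G" "(y,b) \<in> G" using two by blast
    have "(fadd x y, a+b) \<in> G" by (rule linD(3)[OF LC[OF G(1)] G(2,3)])
    then show "(fadd x y, a+b) \<in> \<Union>C" using G(1) by blast
  next
    fix x a r assume "(x,a) \<in> \<Union>C"
    then obtain G where G: "G \<in> C" "(x,a) \<in> G" by blast
    have "(rs r x, r*a) \<in> G" by (rule linD(4)[OF LC[OF G(1)] G(2)])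
    then show "(rs r x, r*a) \<in> \<Union>C" using G(1) by blast
  next
    fix x a assume "(x,a) \<in> \<Union>C"
    then obtain G where G: "G \<in> C" "(x,a) \<in> G" by blast
    show "a \<le> q x" by (rule linD(5)[OF LC[OF G(1)] G(2)])
  qed
qed

lemma lin_ext:
  assumes subadd: "\<And>x y. x \<in> E \<Longrightarrow> y \<in> E \<Longrightarrow> q (fadd x y) \<le> q x + q y"
    and homog: "\<And>x a. x \<in> E \<Longrightarrow> a > 0 \<Longrightarrow> q (rs a x) = a * q x"
    and G: "lin q G" and z: "(fzero, 0) \<in> G" and y: "y \<in> E" and ny: "\<forall>a. (y,a) \<notin> G"
  shows "\<exists>G'. lin q G' \<and> G \<subseteq> G' \<and> G' \<noteq> G"
proof -
  note GE = linD(1)[OF G] and Gf = linD(2)[OF G] and Ga = linD(3)[OF G] and Gs = linD(4)[OF G]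
    and Gq = linD(5)[OF G]
  define S where "S = {a - q (fadd x (rs (-1) y)) | x a. (x,a) \<in> G}"
  define c where "c = Sup S"
  have bound: "z \<le> q (fadd w y) - b" if "z \<in> S" "(w,b) \<in> G" for z w b
  proof -
    obtain x a where xa: "(x,a) \<in> G" "z = a - q (fadd x (rs (-1) y))" using \<open>z \<in> S\<close> unfolding S_def by blast
    have "a + b \<le> q (fadd x w)" using Gq[OF Ga[OF xa(1) that(2)]] .
    also have "fadd x w = fadd (fadd x (rs (-1) y)) (fadd w y)" by (simp add: fun_eq_iff)
    also have "q \<dots> \<le> q (fadd x (rs (-1) y)) + q (fadd w y)"
      by (rule subadd) (use GE[OF xa(1)] GE[OF that(2)] y addE rsE in auto)
    finally show ?thesis using xa(2) by simp
  qed
  have Sne: "S \<noteq> {}" using z unfolding S_def by blast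
  have cS1: "a - q (fadd x (rs (-1) y)) \<le> c" if "(x,a) \<in> G" for x a
    unfolding c_def
  proof (rule cSup_upper)
    show "a - q (fadd x (rs (-1) y)) \<in> S" using that unfolding S_def by blast
    show "bdd_above S" unfolding bdd_above_def using bound[OF _ z] by blast
  qed
  have cS2: "c \<le> q (fadd w y) - b" if "(w,b) \<in> G" for w b
    unfolding c_def by (rule cSup_least[OF Sne]) (use bound that in blast)
  define G' where "G' = {(fadd x (rs t y), a + t*c) | x a t. (x,a) \<in> G}"
  have "lin q G'" unfolding lin_def
  proof (intro conjI allI impI)
    show "G' \<subseteq> E \<times> UNIV" unfolding G'_def using GE y addE rsE by blast
  next
    fix x a b assume A: "(x,a) \<in> G'" "(x,b) \<in> G'"
    then obtain x1 a1 t1 x2 a2 t2 where 1: "(x1,a1) \<in> G" "x = fadd x1 (rs t1 y)" "a = a1 + t1*c"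
      and 2: "(x2,a2) \<in> G" "x = fadd x2 (rs t2 y)" "b = a2 + t2*c" unfolding G'_def by blast
    have pw: "x1 z + complex_of_real t1 * y z = x2 z + complex_of_real t2 * y z" for z
      using 1(2) 2(2) by (metis fadd_apply rs_apply)
    show "a = b"
    proof (cases "t1 = t2")
      case True
      then have "x1 = x2" using pw by (simp add: fun_eq_iff)
      then show ?thesis using Gf 1 2 True by blast
    next
      case False
      then have ne: "complex_of_real t2 - complex_of_real t1 \<noteq> 0" by simp
      have "(rs (1/(t2-t1)) (fadd x1 (rs (-1) x2)), (1/(t2-t1)) * (a1 + (-1)*a2)) \<in> G"
        using Gs Ga 1(1) 2(1) by blast
      moreover have "rs (1/(t2-t1)) (fadd x1 (rs (-1) x2)) = y"
      proof
        fix z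
        have "(complex_of_real t2 - complex_of_real t1) * y z = x1 z - x2 z" using pw[of z]
          by (simp add: algebra_simps)
        then show "rs (1/(t2-t1)) (fadd x1 (rs (-1) x2)) z = y z"
          using ne by (simp add: field_simps)
      qed
      ultimately show ?thesis using ny by auto
    qed
  next
    fix x a x' b assume A: "(x,a) \<in> G'" "(x',b) \<in> G'"
    then obtain x1 a1 t1 x2 a2 t2 where 1: "(x1,a1) \<in> G" "x = fadd x1 (rs t1 y)" "a = a1 + t1*c"
      and 2: "(x2,a2) \<in> G" "x' = fadd x2 (rs t2 y)" "b = a2 + t2*c" unfolding G'_def by blast
    have "fadd x x' = fadd (fadd x1 x2) (rs (t1+t2) y)" using 1 2 by (simp add: fun_eq_iff algebra_simps)
    moreover have "a + b = (a1 + a2) + (t1+t2)*c" using 1 2 by (simp add: algebra_simps)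
    ultimately show "(fadd x x', a+b) \<in> G'" unfolding G'_def using Ga[OF 1(1) 2(1)] by blast
  next
    fix x a r assume "(x,a) \<in> G'"
    then obtain x1 a1 t1 where 1: "(x1,a1) \<in> G" "x = fadd x1 (rs t1 y)" "a = a1 + t1*c"
      unfolding G'_def by blast
    have "rs r x = fadd (rs r x1) (rs (r*t1) y)" using 1 by (simp add: fun_eq_iff algebra_simps)
    moreover have "r * a = r*a1 + (r*t1)*c" using 1 by (simp add: algebra_simps)
    ultimately show "(rs r x, r*a) \<in> G'" unfolding G'_def using Gs[OF 1(1)] by blast
  next
    fix x a assume "(x,a) \<in> G'"
    then obtain x1 a1 t where 1: "(x1,a1) \<in> G" "x = fadd x1 (rs t y)" "a = a1 + t*c"
      unfolding G'_def by blast
    have x1E: "x1 \<in> E" using GE 1(1) .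
    consider "t = 0" | "t > 0" | "t < 0" by linarith
    then show "a \<le> q x"
    proof cases
      case 1
      then have "x = x1" using \<open>x = fadd x1 (rs t y)\<close> by (simp add: fun_eq_iff)
      then show ?thesis using Gq[OF \<open>(x1,a1) \<in> G\<close>] 1 \<open>a = a1 + t*c\<close> by simp
    next
      case 2
      have m: "(rs (1/t) x1, (1/t)*a1) \<in> G" using Gs[OF \<open>(x1,a1) \<in> G\<close>] .
      have "c \<le> q (fadd (rs (1/t) x1) y) - (1/t)*a1" using cS2[OF m] .
      then have "t*c \<le> t * q (fadd (rs (1/t) x1) y) - a1" using 2 by (simp add: field_simps)
      also have "t * q (fadd (rs (1/t) x1) y) = q (rs t (fadd (rs (1/t) x1) y))"
        using homog[OF addE[OF rsE[OF x1E] y] 2] by simp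
      also have "rs t (fadd (rs (1/t) x1) y) = x" using 1 2 by (simp add: fun_eq_iff field_simps)
      finally have "t*c \<le> q x - a1" .
      then show ?thesis using 1(3) by linarith
    next
      case 3
      define s where "s = -t"
      have s: "s > 0" using 3 s_def by simp
      have m: "(rs (1/s) x1, (1/s)*a1) \<in> G" using Gs[OF \<open>(x1,a1) \<in> G\<close>] .
      have "(1/s)*a1 - q (fadd (rs (1/s) x1) (rs (-1) y)) \<le> c" using cS1[OF m] .
      then have "a1 - s * q (fadd (rs (1/s) x1) (rs (-1) y)) \<le> s*c" using s by (simp add: field_simps)
      moreover have "s * q (fadd (rs (1/s) x1) (rs (-1) y)) = q (rs s (fadd (rs (1/s) x1) (rs (-1) y)))"
        using homog[OF addE[OF rsE[OF x1E] rsE[OF y]] s] by simp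
      moreover have "rs s (fadd (rs (1/s) x1) (rs (-1) y)) = x" using 1 s unfolding s_def
        by (simp add: fun_eq_iff field_simps)
      ultimately show ?thesis using 1 s_def by simp
    qed
  qed
  moreover have "G \<subseteq> G'"
  proof
    fix P assume "P \<in> G"
    moreover obtain x a where "P = (x,a)" by (cases P)
    moreover have "fadd x (rs 0 y) = x" by (simp add: fun_eq_iff)
    ultimately show "P \<in> G'" unfolding G'_def by force
  qed
  moreover have "(y, c) \<in> G'"
  proof -
    have "fadd fzero (rs 1 y) = y" by (simp add: fun_eq_iff)
    then show ?thesis unfolding G'_def using z by force
  qed
  ultimately show ?thesis using ny by blast
qed

end

context htvs begin

lemma hb_real:
  assumes subadd: "\<And>x y. x \<in> E \<Longrightarrow> y \<in> E \<Longrightarrow> q (fadd x y) \<le> q x + q y"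
    and homog: "\<And>x a. x \<in> E \<Longrightarrow> a > 0 \<Longrightarrow> q (rs a x) = a * q x"
    and G0: "lin q G0" and G0ne: "G0 \<noteq> {}"
  shows "\<exists>f. (\<forall>x\<in>E. \<forall>y\<in>E. f (fadd x y) = f x + f y) \<and> (\<forall>r. \<forall>x\<in>E. f (rs r x) = r * f x)
             \<and> (\<forall>x\<in>E. f x \<le> q x) \<and> (\<forall>x a. (x,a) \<in> G0 \<longrightarrow> f x = a)"
proof -
  define A where "A = {G. lin q G \<and> G0 \<subseteq> G}"
  have "\<exists>M\<in>A. \<forall>X\<in>A. M \<subseteq> X \<longrightarrow> X = M"
  proof (rule Zorn_Lemma2, rule ballI)
    fix C assume C: "C \<in> chains A"
    show "\<exists>U\<in>A. \<forall>X\<in>C. X \<subseteq> U"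
    proof (cases "C = {}")
      case True
      then show ?thesis using G0 unfolding A_def by blast
    next
      case False
      have CA: "C \<subseteq> A" using chainsD2[OF C] .
      have "lin q (\<Union>C)"
      proof (rule lin_union[OF False])
        show "\<forall>G\<in>C. lin q G" using CA unfolding A_def by blast
        show "\<forall>G1\<in>C. \<forall>G2\<in>C. G1 \<subseteq> G2 \<or> G2 \<subseteq> G1" using chainsD[OF C] by blast
      qed
      moreover have "G0 \<subseteq> \<Union>C" using False CA unfolding A_def by blast
      ultimately show ?thesis unfolding A_def by blast
    qed
  qed
  then obtain G where GA: "G \<in> A" and Gmax: "\<And>X. X \<in> A \<Longrightarrow> G \<subseteq> X \<Longrightarrow> X = G" by blast
  have G: "lin q G" and G0G: "G0 \<subseteq> G" using GA unfolding A_def by auto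
  obtain x0 a0 where x0: "(x0,a0) \<in> G0" using G0ne by auto
  have "(rs 0 x0, 0 * a0) \<in> G" using linD(4)[OF G] x0 G0G by blast
  moreover have "rs 0 x0 = fzero" by (simp add: fun_eq_iff)
  ultimately have z: "(fzero, 0) \<in> G" by simp
  have full: "\<exists>a. (y,a) \<in> G" if y: "y \<in> E" for y
  proof (rule ccontr)
    assume "\<nexists>a. (y, a) \<in> G"
    then obtain G' where G': "lin q G'" "G \<subseteq> G'" "G' \<noteq> G"
      using lin_ext[OF subadd homog G z y] by blast
    then have "G' \<in> A" using G0G unfolding A_def by blast
    then show False using Gmax G' by blast
  qed
  define f where "f x = (THE a. (x,a) \<in> G)" for x
  have fG: "(x, f x) \<in> G" if xE: "x \<in> E" for x
  proof -
    obtain a where a: "(x,a) \<in> G" using full xE by blast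
    have "f x = a" unfolding f_def by (rule the_equality[where P="\<lambda>b. (x,b) \<in> G", OF a]) (use linD(2)[OF G a] in blast)
    then show ?thesis using a by simp
  qed
  have fv: "f x = a" if "(x,a) \<in> G" for x a
    using linD(2)[OF G fG[OF linD(1)[OF G that]] that] .
  show ?thesis
  proof (intro exI conjI ballI allI impI)
    fix x y assume "x \<in> E" "y \<in> E"
    then show "f (fadd x y) = f x + f y" using fv linD(3)[OF G fG fG] by blast
  next
    fix r x assume "x \<in> E"
    then show "f (rs r x) = r * f x" using fv linD(4)[OF G fG] by blast
  next
    fix x assume "x \<in> E"
    then show "f x \<le> q x" using linD(5)[OF G fG] by blast
  next
    fix x a assume "(x,a) \<in> G0"
    then show "f x = a" using fv G0G by blast
  qed
qed

end

locale mink = htvs +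
  fixes V
  assumes openV: "openin T V" and zeroV: "fzero \<in> V" and convV: "convex_wrt fadd fscale V"
begin

lemma VE: "v \<in> V \<Longrightarrow> v \<in> E" using openin_subset[OF openV] by blast

lemma convV': "x \<in> V \<Longrightarrow> y \<in> V \<Longrightarrow> 0 \<le> u \<Longrightarrow> u \<le> 1 \<Longrightarrow> fadd (rs u x) (rs (1-u) y) \<in> V"
  using convV unfolding convex_wrt_def rs_def by blast

lemma star: "v \<in> V \<Longrightarrow> 0 \<le> u \<Longrightarrow> u \<le> 1 \<Longrightarrow> rs u v \<in> V"
proof -
  assume v: "v \<in> V" and u: "0 \<le> u" "u \<le> 1"
  have "fadd (rs u v) (rs (1 - u) fzero) \<in> V"
    using convV' v zeroV u by blast
  moreover have "fadd (rs u v) (rs (1 - u) fzero) = rs u v"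
    by (simp add: fun_eq_iff)
  ultimately show ?thesis by simp
qed

lemma open_scal_set:
  assumes "x \<in> E" shows "open {c. fscale c x \<in> V}"
proof -
  have "openin euclidean {c \<in> topspace euclidean. fscale c x \<in> V}"
    using openin_continuous_map_preimage[OF scal2[OF assms] openV] .
  then show ?thesis by simp
qed

definition "R x = {r::real. r > 0 \<and> rs (1/r) x \<in> V}"
definition "p x = Inf (R x)"

lemma R_up: "r \<in> R x \<Longrightarrow> r \<le> s \<Longrightarrow> x \<in> E \<Longrightarrow> s \<in> R x"
proof -
  assume r: "r \<in> R x" and rs: "r \<le> s" and x: "x \<in> E"
  then have r0: "r > 0" and v: "rs (1/r) x \<in> V" unfolding R_def by auto
  have "r/s \<le> 1" "0 \<le> r/s" using r0 rs by auto
  then have "rs (r/s) (rs (1/r) x) \<in> V"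
    using star[OF v] by blast
  moreover have "rs (r/s) (rs (1/r) x) = rs (1/s) x"
    using r0 by (simp add: fun_eq_iff)
  ultimately show ?thesis using r0 rs unfolding R_def by auto
qed

lemma R_ne: assumes "x \<in> E" shows "R x \<noteq> {}"
proof -
  have "0 \<in> {c. fscale c x \<in> V}" using zeroV by (simp add: fscale_def fzero_def)
  then obtain d where d: "d > 0" "ball 0 d \<subseteq> {c. fscale c x \<in> V}"
    using open_scal_set[OF assms] open_contains_ball by blast
  have "complex_of_real (1/(2/d)) \<in> ball 0 d" using d(1) by (simp add: dist_norm)
  then have "rs (1 / (2/d)) x \<in> V" using d unfolding rs_def by blast
  then have "2/d \<in> R x" using d(1) unfolding R_def by auto
  then show ?thesis by blast
qed

lemma R_bdd: "bdd_below (R x)" unfolding R_def bdd_below_def by (rule exI[of _ 0]) auto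

lemma p_nonneg: "x \<in> E \<Longrightarrow> 0 \<le> p x"
  unfolding p_def by (rule cInf_greatest[OF R_ne]) (auto simp: R_def)

lemma p_lt1_V: assumes "x \<in> E" "p x < 1" shows "x \<in> V"
proof -
  obtain r where "r \<in> R x" "r < 1" using cInf_lessD[OF R_ne[OF assms(1)]] assms(2) unfolding p_def by blast
  then have "1 \<in> R x" using R_up assms(1) by force
  moreover have "rs (1/1) x = x" by (simp add: fun_eq_iff)
  ultimately show ?thesis unfolding R_def by simp
qed

lemma V_p_lt1: assumes "x \<in> V" shows "p x < 1"
proof -
  have x: "x \<in> E" using VE assms .
  have "1 \<in> {c. fscale c x \<in> V}" using assms by (simp add: fscale_def)
  then obtain d where d: "d > 0" "ball 1 d \<subseteq> {c. fscale c x \<in> V}"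
    using open_scal_set[OF x] open_contains_ball by blast
  have "complex_of_real (1 / (1/(1+d/2))) \<in> ball 1 d" using d(1) by (simp add: dist_norm)
  then have "rs (1 / (1/(1+d/2))) x \<in> V" using d unfolding rs_def by blast
  then have "1/(1+d/2) \<in> R x" using d(1) unfolding R_def by (auto simp: field_simps)
  then have "p x \<le> 1/(1+d/2)" unfolding p_def by (rule cInf_lower[OF _ R_bdd])
  also have "\<dots> < 1" using d(1) by (simp add: field_simps)
  finally show ?thesis .
qed

lemma p_homog_le: assumes "x \<in> E" "a > 0"
  shows "p (rs a x) \<le> a * p x"
proof -
  have "p (rs a x) / a \<le> p x"
    unfolding p_def[of x]
  proof (rule cInf_greatest[OF R_ne[OF assms(1)]])
    fix r assume r: "r \<in> R x"
    have "rs (1/(a*r)) (rs a x) = rs (1/r) x" using assms(2) r unfolding R_def by (auto simp: fun_eq_iff)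
    then have "a * r \<in> R (rs a x)"
      using assms(2) r unfolding R_def by auto
    then have "p (rs a x) \<le> a * r" unfolding p_def by (rule cInf_lower[OF _ R_bdd])
    then show "p (rs a x) / a \<le> r" using assms(2) by (simp add: field_simps)
  qed
  then show ?thesis using assms(2) by (simp add: field_simps)
qed

lemma p_homog: assumes "x \<in> E" "a > 0"
  shows "p (rs a x) = a * p x"
proof -
  have "p (rs (1/a) (rs a x)) \<le> (1/a) * p (rs a x)"
    using p_homog_le[of "rs a x" "1/a"] rsE[OF assms(1)] assms(2) by simp
  moreover have "rs (1/a) (rs a x) = x"
    using assms(2) by (simp add: fun_eq_iff)
  ultimately have "a * p x \<le> p (rs a x)" using assms(2) by (simp add: field_simps)
  then show ?thesis using p_homog_le[OF assms] by simp
qed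

lemma R_add: assumes "x \<in> E" "y \<in> E" "r \<in> R x" "s \<in> R y" shows "r + s \<in> R (fadd x y)"
proof -
  have r: "r > 0" "rs (1/r) x \<in> V" and s: "s > 0" "rs (1/s) y \<in> V"
    using assms unfolding R_def by auto
  have "0 \<le> r/(r+s)" "r/(r+s) \<le> 1" using r s by auto
  then have "fadd (rs (r/(r+s)) (rs (1/r) x)) (rs (1 - r/(r+s)) (rs (1/s) y)) \<in> V"
    using convV' r s by blast
  moreover have "fadd (rs (r/(r+s)) (rs (1/r) x)) (rs (1 - r/(r+s)) (rs (1/s) y)) =
       rs (1/(r+s)) (fadd x y)"
  proof -
    have c1: "r/(r+s) * (1/r) = 1/(r+s)" and c2: "(1 - r/(r+s)) * (1/s) = 1/(r+s)"
      using r(1) s(1) by (auto simp: field_simps)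
    show ?thesis unfolding rs_rs c1 c2 fadd_rs ..
  qed
  ultimately show ?thesis using r s unfolding R_def by auto
qed

lemma p_subadd: assumes "x \<in> E" "y \<in> E" shows "p (fadd x y) \<le> p x + p y"
proof -
  have 1: "p (fadd x y) \<le> r + s" if "r \<in> R x" "s \<in> R y" for r s
    unfolding p_def by (rule cInf_lower[OF R_add[OF assms that] R_bdd])
  have 2: "p (fadd x y) - s \<le> p x" if "s \<in> R y" for s
    unfolding p_def[of x] by (rule cInf_greatest[OF R_ne[OF assms(1)]]) (use 1 that in force)
  have "p (fadd x y) - p x \<le> p y"
    unfolding p_def[of y] by (rule cInf_greatest[OF R_ne[OF assms(2)]]) (use 2 in force)
  then show ?thesis by simp
qed

end


context htvs begin

lemma cont_complexify:
  assumes "continuous_map T euclidean (g :: _ \<Rightarrow> real)" "continuous_map T euclidean (h :: _ \<Rightarrow> real)"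
  shows "continuous_map T euclidean (\<lambda>x. complex_of_real (g x) - \<i> * complex_of_real (h x))"
proof -
  have of: "continuous_map euclidean euclidean (complex_of_real)" by (simp add: continuous_intros)
  have mi: "continuous_map euclidean euclidean (\<lambda>w::complex. \<i> * w)" by (simp add: continuous_intros)
  have 1: "continuous_map T euclidean (\<lambda>x. complex_of_real (g x))"
    using continuous_map_compose[OF assms(1) of] by (simp add: o_def)
  have 2: "continuous_map T euclidean (\<lambda>x. \<i> * complex_of_real (h x))"
    using continuous_map_compose[OF continuous_map_compose[OF assms(2) of] mi] by (simp add: o_def)
  show ?thesis using continuous_map_diff[OF 1 2] .
qed

lemma separate:
  assumes MsE: "M \<subseteq> E" and M0: "fzero \<in> M"
    and Madd: "\<And>x y. x \<in> M \<Longrightarrow> y \<in> M \<Longrightarrow> fadd x y \<in> M"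
    and Msc: "\<And>c x. x \<in> M \<Longrightarrow> fscale c x \<in> M"
    and PsiE: "\<Psi> \<in> E" and Psic: "\<Psi> \<notin> T closure_of M"
  shows "\<exists>L. (\<forall>x\<in>E. \<forall>y\<in>E. L (fadd x y) = L x + L y) \<and> (\<forall>c. \<forall>x\<in>E. L (fscale c x) = c * L x)
       \<and> continuous_map T euclidean L \<and> (\<forall>m\<in>M. L m = 0) \<and> L \<Psi> \<noteq> 0"
proof -
  have Mrs: "\<And>r x. x \<in> M \<Longrightarrow> rs r x \<in> M" unfolding rs_def by (rule Msc)
  obtain U where U: "openin T U" "\<Psi> \<in> U" "\<And>y. y \<in> M \<Longrightarrow> y \<notin> U"
    using Psic PsiE unfolding in_closure_of by blast
  have PsiM: "\<Psi> \<notin> M" using U by blast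
  define W where "W = {v \<in> E. fadd \<Psi> v \<in> U}"
  have oW: "openin T W" unfolding W_def by (rule open_pre[OF transl[OF PsiE] U(1)])
  have "fadd \<Psi> fzero = \<Psi>" by (simp add: fun_eq_iff)
  then have "fzero \<in> W" unfolding W_def using zeroE U(2) by simp
  then obtain V where V: "openin T V" "fzero \<in> V" "V \<subseteq> W" "convex_wrt fadd fscale V"
    using convex[OF oW] by blast
  interpret mk: mink T V by unfold_locales (use V in auto)
  have VM: "v \<in> V \<Longrightarrow> fadd \<Psi> v \<notin> M" for v using V(3) U(3) unfolding W_def by blast
  define G0 where "G0 = {(fadd m (rs t \<Psi>), -t) | m t. m \<in> M}"
  have "lin mk.p G0" unfolding lin_def
  proof (intro conjI allI impI)
    show "G0 \<subseteq> E \<times> UNIV" unfolding G0_def using MsE addE rsE PsiE by blast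
  next
    fix x a b assume "(x,a) \<in> G0" "(x,b) \<in> G0"
    then obtain m1 t1 m2 t2 where 1: "m1 \<in> M" "x = fadd m1 (rs t1 \<Psi>)" "a = -t1"
      and 2: "m2 \<in> M" "x = fadd m2 (rs t2 \<Psi>)" "b = -t2" unfolding G0_def by blast
    have pw: "m1 z + complex_of_real t1 * \<Psi> z = m2 z + complex_of_real t2 * \<Psi> z" for z
      using 1(2) 2(2) by (metis fadd_apply rs_apply)
    show "a = b"
    proof (rule ccontr)
      assume "a \<noteq> b"
      then have ne: "complex_of_real t2 - complex_of_real t1 \<noteq> 0" using 1 2 by simp
      have "rs (1/(t2-t1)) (fadd m1 (rs (-1) m2)) \<in> M" using Mrs Madd 1(1) 2(1) by blast
      moreover have "rs (1/(t2-t1)) (fadd m1 (rs (-1) m2)) = \<Psi>"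
      proof
        fix z
        have "(complex_of_real t2 - complex_of_real t1) * \<Psi> z = m1 z - m2 z" using pw[of z]
          by (simp add: algebra_simps)
        then show "rs (1/(t2-t1)) (fadd m1 (rs (-1) m2)) z = \<Psi> z"
          using ne by (simp add: field_simps)
      qed
      ultimately show False using PsiM by simp
    qed
  next
    fix x a y b assume "(x,a) \<in> G0" "(y,b) \<in> G0"
    then obtain m1 t1 m2 t2 where 1: "m1 \<in> M" "x = fadd m1 (rs t1 \<Psi>)" "a = -t1"
      and 2: "m2 \<in> M" "y = fadd m2 (rs t2 \<Psi>)" "b = -t2" unfolding G0_def by blast
    have "fadd x y = fadd (fadd m1 m2) (rs (t1+t2) \<Psi>)" using 1 2 by (simp add: fun_eq_iff algebra_simps)
    moreover have "a + b = -(t1+t2)" using 1 2 by simp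
    ultimately show "(fadd x y, a+b) \<in> G0" unfolding G0_def using Madd[OF 1(1) 2(1)] by blast
  next
    fix x a r assume "(x,a) \<in> G0"
    then obtain m1 t1 where 1: "m1 \<in> M" "x = fadd m1 (rs t1 \<Psi>)" "a = -t1"
      unfolding G0_def by blast
    have "rs r x = fadd (rs r m1) (rs (r*t1) \<Psi>)" using 1 by (simp add: fun_eq_iff algebra_simps)
    moreover have "r * a = -(r*t1)" using 1 by simp
    ultimately show "(rs r x, r*a) \<in> G0" unfolding G0_def using Mrs[OF 1(1)] by blast
  next
    fix x a assume "(x,a) \<in> G0"
    then obtain m t where 1: "m \<in> M" "x = fadd m (rs t \<Psi>)" "a = -t"
      unfolding G0_def by blast
    have xE: "x \<in> E" using 1 MsE addE rsE PsiE by blast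
    show "a \<le> mk.p x"
    proof (cases "t \<ge> 0")
      case True
      then show ?thesis using mk.p_nonneg[OF xE] 1(3) by simp
    next
      case False
      define s where "s = -t"
      have s: "s > 0" using False s_def by simp
      define w where "w = fadd (rs (1/s) m) (rs (-1) \<Psi>)"
      have wE: "w \<in> E" unfolding w_def using 1(1) MsE addE rsE PsiE by blast
      have "fadd \<Psi> w = rs (1/s) m" unfolding w_def by (simp add: fun_eq_iff)
      then have "fadd \<Psi> w \<in> M" using Mrs 1(1) by simp
      then have "w \<notin> V" using VM by blast
      then have "1 \<le> mk.p w" using mk.p_lt1_V[OF wE] by force
      then have "s * 1 \<le> s * mk.p w" using s by (intro mult_left_mono) auto
      moreover have "mk.p (rs s w) = s * mk.p w" using mk.p_homog[OF wE s] .
      moreover have "rs s w = x" unfolding w_def using 1(2) s s_def by (simp add: fun_eq_iff field_simps)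
      ultimately have "s \<le> mk.p x" by simp
      then show ?thesis using 1(3) s_def by simp
    qed
  qed
  moreover have "G0 \<noteq> {}" unfolding G0_def using M0 by blast
  ultimately obtain f where fadd': "\<forall>x\<in>E. \<forall>y\<in>E. f (fadd x y) = f x + f y"
      and frs: "\<forall>r. \<forall>x\<in>E. f (rs r x) = r * f x" and fp: "\<forall>x\<in>E. f x \<le> mk.p x"
      and fG0: "\<forall>x a. (x,a) \<in> G0 \<longrightarrow> f x = a"
    using hb_real[of mk.p G0] mk.p_subadd mk.p_homog by blast
  have fM: "f m = 0" if "m \<in> M" for m
  proof -
    have "fadd m (rs 0 \<Psi>) = m" by (simp add: fun_eq_iff)
    then have "(m, -0) \<in> G0" unfolding G0_def using that by force
    then show ?thesis using fG0 by simp
  qed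
  have fPsi: "f \<Psi> = -1"
  proof -
    have "fadd fzero (rs 1 \<Psi>) = \<Psi>" by (simp add: fun_eq_iff)
    then have "(fadd fzero (rs 1 \<Psi>), -1) \<in> G0 \<Longrightarrow> (\<Psi>, -1) \<in> G0" by simp
    moreover have "(fadd fzero (rs 1 \<Psi>), -1) \<in> G0" unfolding G0_def using M0 by blast
    ultimately have "(\<Psi>, -1) \<in> G0" by blast
    then show ?thesis using fG0 by simp
  qed
  have fcont: "continuous_map T euclidean f"
  proof (rule cont_metric_crit)
    fix x0 e assume x0: "x0 \<in> E" and e: "(e::real) > 0"
    define g1 where "g1 z = rs (1/e) (fadd (rs (-1) x0) z)" for z
    define g2 where "g2 z = rs (1/e) (fadd x0 (rs (-1) z))" for z
    have cg1: "continuous_map T T g1"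
    proof -
      have "continuous_map T T (fscale (complex_of_real (1/e)) \<circ> fadd (rs (-1) x0))"
        by (rule continuous_map_compose[OF transl[OF rsE[OF x0]] scal])
      then show ?thesis unfolding g1_def rs_def o_def by simp
    qed
    have cg2: "continuous_map T T g2"
    proof -
      have "continuous_map T T (fscale (complex_of_real (1/e)) \<circ> (fadd x0 \<circ> fscale (complex_of_real (-1))))"
        by (rule continuous_map_compose[OF continuous_map_compose[OF scal transl[OF x0]] scal])
      then show ?thesis unfolding g2_def rs_def o_def by simp
    qed
    define U' where "U' = {z \<in> E. g1 z \<in> V} \<inter> {z \<in> E. g2 z \<in> V}"
    have "openin T U'" unfolding U'_def using open_pre[OF cg1 V(1)] open_pre[OF cg2 V(1)] by blast
    moreover have "g1 x0 = fzero" "g2 x0 = fzero" unfolding g1_def g2_def by (simp_all add: fun_eq_iff)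
    then have "x0 \<in> U'" unfolding U'_def using x0 V(2) by simp
    moreover have "dist (f z) (f x0) < e" if z: "z \<in> U'" for z
    proof -
      have zE: "z \<in> E" using z unfolding U'_def by blast
      have zz: "g1 z \<in> V" "g2 z \<in> V" using z unfolding U'_def by auto
      have "f (g1 z) \<le> mk.p (g1 z)" using fp mk.VE[OF zz(1)] by blast
      also have "\<dots> < 1" by (rule mk.V_p_lt1[OF zz(1)])
      finally have l1: "f (g1 z) < 1" .
      have "f (g1 z) = (1/e) * f (fadd (rs (-1) x0) z)"
        unfolding g1_def using frs addE[OF rsE[OF x0] zE] by blast
      also have "f (fadd (rs (-1) x0) z) = f (rs (-1) x0) + f z" using fadd' rsE[OF x0] zE by blast
      also have "f (rs (-1) x0) = - f x0" using frs x0 by simp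
      finally have "f (g1 z) = (1/e) * (- f x0 + f z)" .
      with l1 have a1: "f z - f x0 < e" using e by (simp add: field_simps)
      have "f (g2 z) \<le> mk.p (g2 z)" using fp mk.VE[OF zz(2)] by blast
      also have "\<dots> < 1" by (rule mk.V_p_lt1[OF zz(2)])
      finally have l2: "f (g2 z) < 1" .
      have "f (g2 z) = (1/e) * f (fadd x0 (rs (-1) z))"
        unfolding g2_def using frs addE[OF x0 rsE[OF zE]] by blast
      also have "f (fadd x0 (rs (-1) z)) = f x0 + f (rs (-1) z)" using fadd' rsE[OF zE] x0 by blast
      also have "f (rs (-1) z) = - f z" using frs zE by simp
      finally have "f (g2 z) = (1/e) * (f x0 - f z)" by simp
      with l2 have a2: "f x0 - f z < e" using e by (simp add: field_simps)
      show ?thesis using a1 a2 by (simp add: dist_real_def abs_less_iff)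
    qed
    ultimately show "\<exists>U. openin T U \<and> x0 \<in> U \<and> (\<forall>y\<in>U. dist (f y) (f x0) < e)" by blast
  qed
  define L where "L x = complex_of_real (f x) - \<i> * complex_of_real (f (fscale \<i> x))" for x
  have fsc: "f (fscale c x) = Re c * f x + Im c * f (fscale \<i> x)" if x: "x \<in> E" for c x
  proof -
    have "fscale c x = fadd (rs (Re c) x) (rs (Im c) (fscale \<i> x))"
    proof
      fix z show "fscale c x z = fadd (rs (Re c) x) (rs (Im c) (fscale \<i> x)) z"
        by (simp add: complex_eq_iff algebra_simps)
    qed
    then show ?thesis using fadd' frs x rsE sclE by simp
  qed
  show ?thesis
  proof (intro exI conjI ballI allI)
    fix x y assume x: "x \<in> E" and y: "y \<in> E"
    have "fscale \<i> (fadd x y) = fadd (fscale \<i> x) (fscale \<i> y)" by (simp add: fun_eq_iff algebra_simps)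
    then show "L (fadd x y) = L x + L y" unfolding L_def using fadd' x y sclE
      by (simp add: algebra_simps)
  next
    fix c x assume x: "x \<in> E"
    have "fscale \<i> (fscale c x) = fscale (\<i> * c) x" by (simp add: fun_eq_iff)
    then have "f (fscale \<i> (fscale c x)) = - Im c * f x + Re c * f (fscale \<i> x)"
      using fsc[OF x, of "\<i> * c"] by simp
    then show "L (fscale c x) = c * L x" unfolding L_def using fsc[OF x, of c]
      by (simp add: complex_eq_iff algebra_simps)
  next
    show "continuous_map T euclidean L" unfolding L_def
      by (rule cont_complexify[OF fcont]) (rule continuous_map_compose[OF scal fcont, unfolded o_def])
  next
    fix m assume "m \<in> M"
    then show "L m = 0" unfolding L_def using fM Msc by simp
  next
    show "L \<Psi> \<noteq> 0" unfolding L_def using fPsi by (simp add: complex_eq_iff)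
  qed
qed

end




lemma cdual_add:
  assumes "\<Phi> \<in> cdual sc D t" "\<Psi> \<in> cdual sc D t"
  shows "fadd \<Phi> \<Psi> \<in> cdual sc D t"
proof -
  have c: "continuous_map t euclidean (\<lambda>x. \<Phi> x + \<Psi> x)"
    using assms unfolding cdual_def by (auto intro: continuous_map_add)
  show ?thesis using assms c unfolding cdual_def fadd_def by (simp add: algebra_simps)
qed

lemma cdual_scale:
  assumes "\<Phi> \<in> cdual sc D t"
  shows "fscale c \<Phi> \<in> cdual sc D t"
proof -
  have "continuous_map euclidean euclidean (\<lambda>w::complex. c * w)" by (simp add: continuous_intros)
  then have co: "continuous_map t euclidean (\<lambda>x. c * \<Phi> x)"
    using continuous_map_compose[of t euclidean \<Phi>] assms unfolding cdual_def o_def by blast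
  show ?thesis using assms co unfolding cdual_def fscale_def by (simp add: algebra_simps)
qed

lemma cdual_zero_fun: "fzero \<in> cdual sc D t"
  unfolding cdual_def fzero_def by simp

lemma fspan_sub: assumes "\<forall>n. \<zeta> n \<in> cdual sc D t" shows "fspan \<zeta> \<subseteq> cdual sc D t"
proof
  fix \<Phi> assume "\<Phi> \<in> fspan \<zeta>"
  then obtain N c where \<Phi>: "\<Phi> = (\<lambda>x. \<Sum>n<N. c n * \<zeta> n x)" unfolding fspan_def by blast
  have "(\<lambda>x. \<Sum>n<N. c n * \<zeta> n x) \<in> cdual sc D t" for N
  proof (induction N)
    case 0
    then show ?case using cdual_zero_fun[of sc D t] by (simp add: fzero_def)
  next
    case (Suc N)
    have "fadd (\<lambda>x. \<Sum>n<N. c n * \<zeta> n x) (fscale (c N) (\<zeta> N)) \<in> cdual sc D t"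
      using cdual_add[OF Suc cdual_scale[OF assms[rule_format, of N]]] .
    then show ?case by (simp add: fadd_def fscale_def)
  qed
  then show "\<Phi> \<in> cdual sc D t" using \<Phi> by simp
qed

lemma sum_pad_aux: "0 * (w::complex) + a = a" by simp

lemma sum_pad: "(N1::nat) \<le> N \<Longrightarrow> (\<Sum>n<N. (if n < N1 then c n else 0) * (z n::complex)) = (\<Sum>n<N1. c n * z n)"
proof (induction N)
  case 0 then show ?case by simp
next
  case (Suc N)
  then show ?case by (cases "N1 = Suc N") (auto simp: lessThan_Suc sum_pad_aux)
qed

lemma fspan_props:
  shows "fzero \<in> fspan \<zeta>"
    and "\<And>x y. x \<in> fspan \<zeta> \<Longrightarrow> y \<in> fspan \<zeta> \<Longrightarrow> fadd x y \<in> fspan \<zeta>"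
    and "\<And>c x. x \<in> fspan \<zeta> \<Longrightarrow> fscale c x \<in> fspan \<zeta>"
    and "\<And>k. \<zeta> k \<in> fspan \<zeta>"
proof -
  show "fzero \<in> fspan \<zeta>" unfolding fspan_def fzero_def by (rule CollectI, rule exI[of _ 0]) simp
next
  fix x y assume "x \<in> fspan \<zeta>" "y \<in> fspan \<zeta>"
  then obtain N1 c1 N2 c2 where x: "x = (\<lambda>z. \<Sum>n<N1. c1 n * \<zeta> n z)" and y: "y = (\<lambda>z. \<Sum>n<N2. c2 n * \<zeta> n z)"
    unfolding fspan_def by blast
  define N where "N = max N1 N2"
  define c where "c n = (if n < N1 then c1 n else 0) + (if n < N2 then c2 n else 0)" for n
  have "fadd x y = (\<lambda>z. \<Sum>n<N. c n * \<zeta> n z)"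
  proof
    fix z
    have "(\<Sum>n<N. c n * \<zeta> n z) = (\<Sum>n<N. (if n < N1 then c1 n else 0) * \<zeta> n z) + (\<Sum>n<N. (if n < N2 then c2 n else 0) * \<zeta> n z)"
      unfolding c_def by (simp add: distrib_right sum.distrib)
    also have "\<dots> = x z + y z" unfolding x y N_def by (simp add: sum_pad)
    finally show "fadd x y z = (\<Sum>n<N. c n * \<zeta> n z)" by simp
  qed
  then show "fadd x y \<in> fspan \<zeta>" unfolding fspan_def by blast
next
  fix c x assume "x \<in> fspan \<zeta>"
  then obtain N c1 where x: "x = (\<lambda>z. \<Sum>n<N. c1 n * \<zeta> n z)" unfolding fspan_def by blast
  have "fscale c x = (\<lambda>z. \<Sum>n<N. (c * c1 n) * \<zeta> n z)"
    unfolding x fscale_def by (simp add: sum_distrib_left mult.assoc)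
  then show "fscale c x \<in> fspan \<zeta>" unfolding fspan_def by (intro CollectI exI[of _ N] exI[of _ "\<lambda>n. c * c1 n"]) simp
next
  fix k
  have "\<zeta> k = (\<lambda>z. \<Sum>n<Suc k. (if n = k then 1 else 0) * \<zeta> n z)"
    by (simp add: if_distrib sum.If_cases)
  then show "\<zeta> k \<in> fspan \<zeta>" unfolding fspan_def
    by (intro CollectI exI[of _ "Suc k"] exI[of _ "\<lambda>n. if n = k then 1 else 0"])
qed


lemma dense_gen:
  fixes sc :: "complex \<Rightarrow> 'a::ab_group_add \<Rightarrow> 'a"
  assumes H: "htvs T" and top: "topspace T = cdual sc D t"
    and rhs: "rigged_hilbert_space sc ip D t"
    and basis: "schauder_basis sc D t \<xi>"
    and zeta_dual: "\<forall>n. \<zeta> n \<in> cdual sc D t"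
    and expansion: "\<forall>f\<in>D. limitin t (\<lambda>N. \<Sum>n<N. sc (cnj (\<zeta> n f)) (\<xi> n)) f sequentially"
    and eval: "\<And>L. (\<forall>\<Phi>\<in>cdual sc D t. \<forall>\<Psi>\<in>cdual sc D t. L (fadd \<Phi> \<Psi>) = L \<Phi> + L \<Psi>) \<Longrightarrow>
         (\<forall>c. \<forall>\<Phi>\<in>cdual sc D t. L (fscale c \<Phi>) = c * L \<Phi>) \<Longrightarrow> continuous_map T euclidean L \<Longrightarrow>
         \<exists>f\<in>D. \<forall>\<Phi>\<in>cdual sc D t. L \<Phi> = \<Phi> f"
  shows "T closure_of fspan \<zeta> = cdual sc D t"
proof
  show "T closure_of fspan \<zeta> \<subseteq> cdual sc D t" using closure_of_subset_topspace[of T "fspan \<zeta>"] top by simp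
next
  interpret htvs T by (rule H)
  show "cdual sc D t \<subseteq> T closure_of fspan \<zeta>"
  proof
    fix \<Psi> assume \<Psi>: "\<Psi> \<in> cdual sc D t"
    show "\<Psi> \<in> T closure_of fspan \<zeta>"
    proof (rule ccontr)
      assume nc: "\<Psi> \<notin> T closure_of fspan \<zeta>"
      have MsE: "fspan \<zeta> \<subseteq> E" using fspan_sub[OF zeta_dual] top by simp
      have PsiE: "\<Psi> \<in> E" using \<Psi> top by simp
      have "\<exists>L. (\<forall>x\<in>E. \<forall>y\<in>E. L (fadd x y) = L x + L y) \<and> (\<forall>c. \<forall>x\<in>E. L (fscale c x) = c * L x)
       \<and> continuous_map T euclidean L \<and> (\<forall>m\<in>fspan \<zeta>. L m = 0) \<and> L \<Psi> \<noteq> 0"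
        by (rule separate[OF MsE fspan_props(1) fspan_props(2) fspan_props(3) PsiE nc])
      then obtain L where L: "\<forall>x\<in>E. \<forall>y\<in>E. L (fadd x y) = L x + L y" "\<forall>c. \<forall>x\<in>E. L (fscale c x) = c * L x"
        "continuous_map T euclidean L" "\<forall>m\<in>fspan \<zeta>. L m = 0" "L \<Psi> \<noteq> 0"
        by (elim exE conjE) (intro that)
      have "\<exists>f\<in>D. \<forall>\<Phi>\<in>cdual sc D t. L \<Phi> = \<Phi> f"
        by (rule eval) (use L(1,2,3) top in simp_all)
      then obtain g where g: "g \<in> D" "\<forall>\<Phi>\<in>cdual sc D t. L \<Phi> = \<Phi> g" by blast
      have "\<zeta> k g = 0" for k
      proof -
        have "L (\<zeta> k) = 0" using L(4) fspan_props(4) by blast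
        moreover have "L (\<zeta> k) = \<zeta> k g" using g(2) zeta_dual by blast
        ultimately show ?thesis by simp
      qed
      then have "(\<lambda>k. \<Psi> (\<xi> k) * \<zeta> k g) sums 0" by simp
      moreover have "(\<lambda>k. \<Psi> (\<xi> k) * \<zeta> k g) sums \<Psi> g"
        by (rule part3[OF rhs basis expansion \<Psi> g(1)])
      ultimately have "\<Psi> g = 0" using sums_unique2 by blast
      then show False using g \<Psi> L(5) by simp
    qed
  qed
qed

lemma lctvs_htvs:
  assumes "lctvs fadd fscale fzero T"
  shows "htvs T"
proof -
  have z: "fzero \<in> topspace T"
   and a: "continuous_map (prod_topology T T) T (\<lambda>(x, y). fadd x y)"
   and s: "continuous_map (prod_topology euclidean T) T (\<lambda>(c, x). fscale c x)"
   and cv: "\<And>U. openin T U \<Longrightarrow> fzero \<in> U \<Longrightarrow> (\<exists>V. openin T V \<and> fzero \<in> V \<and> V \<subseteq> U \<and> convex_wrt fadd fscale V)"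
    using assms unfolding lctvs_def by blast+
  show ?thesis
  proof
    fix a assume aT: "a \<in> topspace T"
    have "continuous_map T (prod_topology T T) (\<lambda>x. (a, x))"
      by (rule continuous_map_pairedI) (use aT in auto)
    from continuous_map_compose[OF this a] show "continuous_map T T (fadd a)" by (simp add: o_def)
  next
    fix c :: complex
    have "continuous_map T (prod_topology euclidean T) (\<lambda>x. (c, x))"
      by (rule continuous_map_pairedI) auto
    from continuous_map_compose[OF this s] show "continuous_map T T (fscale c)" by (simp add: o_def)
  next
    fix x assume xT: "x \<in> topspace T"
    have "continuous_map euclidean (prod_topology euclidean T) (\<lambda>c::complex. (c, x))"
      by (rule continuous_map_pairedI) (use xT in auto)
    from continuous_map_compose[OF this s] show "continuous_map euclidean T (\<lambda>c. fscale c x)" by (simp add: o_def)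
  qed (use z cv in auto)
qed





lemma tvs_bounded_Un:
  assumes "tvs_bounded sc z T B1" "tvs_bounded sc z T B2"
  shows "tvs_bounded sc z T (B1 \<union> B2)"
proof -
  have "B1 \<union> B2 \<subseteq> topspace T" using assms unfolding tvs_bounded_def by blast
  moreover have "\<exists>s>0. \<forall>r::real. r > s \<longrightarrow> B1 \<union> B2 \<subseteq> sc (complex_of_real r) ` U"
    if U: "openin T U \<and> z \<in> U" for U
  proof -
  obtain s1 where s1: "s1 > 0" "\<forall>r::real. r > s1 \<longrightarrow> B1 \<subseteq> sc (complex_of_real r) ` U"
    using assms(1) U unfolding tvs_bounded_def by blast
  obtain s2 where s2: "s2 > 0" "\<forall>r::real. r > s2 \<longrightarrow> B2 \<subseteq> sc (complex_of_real r) ` U"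
    using assms(2) U unfolding tvs_bounded_def by blast
  show ?thesis
    using s1 s2 by (intro exI[of _ "max s1 s2"]) auto
  qed
  ultimately show ?thesis unfolding tvs_bounded_def by blast
qed

lemma tvs_bounded_empty: "tvs_bounded sc z T {}"
  unfolding tvs_bounded_def by (intro conjI allI impI exI[of _ "1::real"]) auto

lemma unif_top_open:
  assumes "\<forall>B1\<in>BS. \<forall>B2\<in>BS. B1 \<union> B2 \<in> BS"
  shows "openin (unif_top X BS ev) U \<longleftrightarrow> U \<subseteq> X \<and>
     (\<forall>x\<in>U. \<exists>B\<in>BS. \<exists>e>0. {z\<in>X. \<forall>y\<in>B. cmod (ev z y - ev x y) < e} \<subseteq> U)"
proof -
  let ?P = "\<lambda>U. U \<subseteq> X \<and>
     (\<forall>x\<in>U. \<exists>B\<in>BS. \<exists>e>0. {z\<in>X. \<forall>y\<in>B. cmod (ev z y - ev x y) < e} \<subseteq> U)"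
  have "istopology ?P"
    unfolding istopology_def
  proof (rule conjI; intro allI impI)
    fix S T assume S: "?P S" and T: "?P T"
    show "?P (S \<inter> T)"
    proof (intro conjI ballI)
      show "S \<inter> T \<subseteq> X" using S by blast
      fix x assume x: "x \<in> S \<inter> T"
      obtain B1 e1 where 1: "B1 \<in> BS" "e1 > 0" "{z\<in>X. \<forall>y\<in>B1. cmod (ev z y - ev x y) < e1} \<subseteq> S"
        using S x by blast
      obtain B2 e2 where 2: "B2 \<in> BS" "e2 > 0" "{z\<in>X. \<forall>y\<in>B2. cmod (ev z y - ev x y) < e2} \<subseteq> T"
        using T x by blast
      have "{z\<in>X. \<forall>y\<in>B1 \<union> B2. cmod (ev z y - ev x y) < min e1 e2} \<subseteq> S \<inter> T"
      proof
        fix z assume "z \<in> {z\<in>X. \<forall>y\<in>B1 \<union> B2. cmod (ev z y - ev x y) < min e1 e2}"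
        then have "z \<in> {z\<in>X. \<forall>y\<in>B1. cmod (ev z y - ev x y) < e1}"
           "z \<in> {z\<in>X. \<forall>y\<in>B2. cmod (ev z y - ev x y) < e2}" by auto
        then show "z \<in> S \<inter> T" using 1(3) 2(3) by blast
      qed
      then show "\<exists>B\<in>BS. \<exists>e>0. {z\<in>X. \<forall>y\<in>B. cmod (ev z y - ev x y) < e} \<subseteq> S \<inter> T"
        using assms 1(1) 2(1) 1(2) 2(2) by (intro bexI[of _ "B1 \<union> B2"] exI[of _ "min e1 e2"]) auto
    qed
  next
    fix K assume K: "\<forall>S\<in>K. ?P S"
    show "?P (\<Union>K)"
    proof (intro conjI ballI)
      show "\<Union>K \<subseteq> X" using K by blast
      fix x assume "x \<in> \<Union>K"
      then obtain S where S: "S \<in> K" "x \<in> S" by blast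
      then obtain B e where "B \<in> BS" "e > 0" "{z\<in>X. \<forall>y\<in>B. cmod (ev z y - ev x y) < e} \<subseteq> S"
        using K by blast
      then show "\<exists>B\<in>BS. \<exists>e>0. {z\<in>X. \<forall>y\<in>B. cmod (ev z y - ev x y) < e} \<subseteq> \<Union>K"
        using S(1) by blast
    qed
  qed
  then show ?thesis unfolding unif_top_def by simp
qed

lemma unif_top_space:
  assumes "\<forall>B1\<in>BS. \<forall>B2\<in>BS. B1 \<union> B2 \<in> BS" "{} \<in> BS"
  shows "topspace (unif_top X BS ev) = X"
proof
  show "topspace (unif_top X BS ev) \<subseteq> X"
  proof
    fix x assume "x \<in> topspace (unif_top X BS ev)"
    then obtain S where "openin (unif_top X BS ev) S" "x \<in> S" unfolding topspace_def by blast
    then show "x \<in> X" using unif_top_open[OF assms(1), of X ev S] by blast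
  qed
  have "openin (unif_top X BS ev) X"
  proof (subst unif_top_open[OF assms(1)], intro conjI ballI)
    fix x assume "x \<in> X"
    show "\<exists>B\<in>BS. \<exists>e>0. {z \<in> X. \<forall>y\<in>B. cmod (ev z y - ev x y) < e} \<subseteq> X"
      using assms(2) by (intro bexI[of _ "{}"] exI[of _ "1::real"]) auto
  qed simp
  then show "X \<subseteq> topspace (unif_top X BS ev)" by (rule openin_subset)
qed

lemma bounded_on:
  fixes sc :: "complex \<Rightarrow> 'a::ab_group_add \<Rightarrow> 'a"
  assumes rhs: "rigged_hilbert_space sc ip D t" and \<Phi>: "\<Phi> \<in> cdual sc D t"
    and B: "tvs_bounded sc 0 t B"
  shows "\<exists>K>0. \<forall>y\<in>B. cmod (\<Phi> y) \<le> K"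
proof -
  have tD: "topspace t = D" using rhs unfolding rigged_hilbert_space_def by blast
  have cont: "continuous_map t euclidean \<Phi>" and scl: "\<And>c x. x \<in> D \<Longrightarrow> \<Phi> (sc c x) = cnj c * \<Phi> x"
    using \<Phi> unfolding cdual_def by blast+
  define U0 where "U0 = {x \<in> topspace t. \<Phi> x \<in> ball 0 1}"
  have oU0: "openin t U0" unfolding U0_def by (rule openin_continuous_map_preimage[OF cont]) simp
  have "0 \<in> U0" unfolding U0_def using tD subspace_D(2)[OF rhs] cdual_zero[OF \<Phi> subspace_D(2)[OF rhs]] by simp
  then obtain s where s: "s > 0" "\<forall>r::real. r > s \<longrightarrow> B \<subseteq> sc (complex_of_real r) ` U0"
    using B oU0 unfolding tvs_bounded_def by blast
  have sub: "B \<subseteq> sc (complex_of_real (s+1)) ` U0" using s(2)[rule_format, of "s+1"] by simp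
  show ?thesis
  proof (intro exI[of _ "s+1"] conjI ballI)
    show "(0::real) < s + 1" using s by simp
    fix y assume "y \<in> B"
    then obtain u where u: "u \<in> U0" "y = sc (complex_of_real (s+1)) u" using sub by blast
    have uD: "u \<in> D" and "cmod (\<Phi> u) < 1" using u(1) tD unfolding U0_def by auto
    then have "cmod (\<Phi> y) = (s+1) * cmod (\<Phi> u)" using u(2) scl s(1) by (simp add: norm_mult)
    also have "\<dots> \<le> (s+1) * 1" using \<open>cmod (\<Phi> u) < 1\<close> s(1) by (intro mult_left_mono) auto
    finally show "cmod (\<Phi> y) \<le> s + 1" by simp
  qed
qed


context
  fixes sc :: "complex \<Rightarrow> 'a::ab_group_add \<Rightarrow> 'a" and ip D t
  assumes rhs: "rigged_hilbert_space sc ip D t"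
begin


lemma BS_un: "\<forall>B1\<in>{B. tvs_bounded sc 0 t B}. \<forall>B2\<in>{B. tvs_bounded sc 0 t B}. B1 \<union> B2 \<in> {B. tvs_bounded sc 0 t B}"
  by (simp add: tvs_bounded_Un)

lemma openS: "openin (strong_dual_top sc D t) U \<longleftrightarrow> U \<subseteq> (cdual sc D t) \<and>
     (\<forall>x\<in>U. \<exists>B. tvs_bounded sc 0 t B \<and> (\<exists>e>0. {z\<in>(cdual sc D t). \<forall>y\<in>B. cmod (z y - x y) < e} \<subseteq> U))"
  unfolding strong_dual_top_def by (subst unif_top_open[OF BS_un]) simp

lemma topS: "topspace (strong_dual_top sc D t) = (cdual sc D t)"
  unfolding strong_dual_top_def by (rule unif_top_space[OF BS_un]) (simp add: tvs_bounded_empty)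

lemma cont_SS:
  assumes gX: "\<And>x. x \<in> (cdual sc D t) \<Longrightarrow> g x \<in> (cdual sc D t)"
    and loc: "\<And>x B e. x \<in> (cdual sc D t) \<Longrightarrow> tvs_bounded sc 0 t B \<Longrightarrow> e > 0 \<Longrightarrow>
       \<exists>e'>0. \<forall>z\<in>(cdual sc D t). (\<forall>y\<in>B. cmod (z y - x y) < e') \<longrightarrow> (\<forall>y\<in>B. cmod (g z y - g x y) < e)"
  shows "continuous_map (strong_dual_top sc D t) (strong_dual_top sc D t) g"
  unfolding continuous_map_def
proof (intro conjI allI impI)
  show "g \<in> topspace (strong_dual_top sc D t) \<rightarrow> topspace (strong_dual_top sc D t)" using gX topS by auto
  fix U assume U: "openin (strong_dual_top sc D t) U"
  show "openin (strong_dual_top sc D t) {x \<in> topspace (strong_dual_top sc D t). g x \<in> U}"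
  proof (subst openS, intro conjI ballI)
    show "{x \<in> topspace (strong_dual_top sc D t). g x \<in> U} \<subseteq> (cdual sc D t)" using topS by auto
    fix x assume x: "x \<in> {x \<in> topspace (strong_dual_top sc D t). g x \<in> U}"
    then have xX: "x \<in> (cdual sc D t)" and gU: "g x \<in> U" using topS by auto
    obtain B e where B: "tvs_bounded sc 0 t B" "e > 0" "{z\<in>(cdual sc D t). \<forall>y\<in>B. cmod (z y - g x y) < e} \<subseteq> U"
      using U gU unfolding openS by blast
    obtain e' where e': "e' > 0" "\<forall>z\<in>(cdual sc D t). (\<forall>y\<in>B. cmod (z y - x y) < e') \<longrightarrow> (\<forall>y\<in>B. cmod (g z y - g x y) < e)"
      using loc[OF xX B(1,2)] by blast
    have "{z\<in>(cdual sc D t). \<forall>y\<in>B. cmod (z y - x y) < e'} \<subseteq> {x \<in> topspace (strong_dual_top sc D t). g x \<in> U}"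
    proof
      fix z assume z: "z \<in> {z\<in>(cdual sc D t). \<forall>y\<in>B. cmod (z y - x y) < e'}"
      then have "g z \<in> {z\<in>(cdual sc D t). \<forall>y\<in>B. cmod (z y - g x y) < e}" using e'(2) gX by auto
      then show "z \<in> {x \<in> topspace (strong_dual_top sc D t). g x \<in> U}" using B(3) z topS by auto
    qed
    then show "\<exists>B. tvs_bounded sc 0 t B \<and> (\<exists>e>0. {z\<in>(cdual sc D t). \<forall>y\<in>B. cmod (z y - x y) < e} \<subseteq> {x \<in> topspace (strong_dual_top sc D t). g x \<in> U})"
      using B(1) e'(1) by blast
  qed
qed

lemma htvs_SDT: "htvs (strong_dual_top sc D t)"
proof
  show "fzero \<in> topspace (strong_dual_top sc D t)" using topS cdual_zero_fun by simp
next
  fix a assume a: "a \<in> topspace (strong_dual_top sc D t)"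
  show "continuous_map (strong_dual_top sc D t) (strong_dual_top sc D t) (fadd a)"
  proof (rule cont_SS)
    show "\<And>x. x \<in> (cdual sc D t) \<Longrightarrow> fadd a x \<in> (cdual sc D t)" using cdual_add a topS by simp
    fix x B and e :: real assume "e > 0"
    then show "\<exists>e'>0. \<forall>z\<in>(cdual sc D t). (\<forall>y\<in>B. cmod (z y - x y) < e') \<longrightarrow> (\<forall>y\<in>B. cmod (fadd a z y - fadd a x y) < e)"
      by (intro exI[of _ e]) simp
  qed
next
  fix c :: complex
  show "continuous_map (strong_dual_top sc D t) (strong_dual_top sc D t) (fscale c)"
  proof (rule cont_SS)
    show "\<And>x. x \<in> (cdual sc D t) \<Longrightarrow> fscale c x \<in> (cdual sc D t)" using cdual_scale by blast
    fix x B and e :: real assume e: "e > 0"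
    show "\<exists>e'>0. \<forall>z\<in>(cdual sc D t). (\<forall>y\<in>B. cmod (z y - x y) < e') \<longrightarrow> (\<forall>y\<in>B. cmod (fscale c z y - fscale c x y) < e)"
    proof (intro exI[of _ "e / (cmod c + 1)"] conjI ballI impI)
      have cp: "cmod c + 1 > 0" using norm_ge_zero[of c] by linarith
      show "0 < e / (cmod c + 1)" using e cp by simp
      fix z y assume "\<forall>y\<in>B. cmod (z y - x y) < e / (cmod c + 1)" "y \<in> B"
      then have d: "cmod (z y - x y) < e / (cmod c + 1)" by blast
      have cp: "cmod c + 1 > 0" using norm_ge_zero[of c] by linarith
      have "cmod (fscale c z y - fscale c x y) = cmod c * cmod (z y - x y)"
        by (simp add: norm_mult[symmetric] right_diff_distrib)
      also have "\<dots> \<le> (cmod c + 1) * cmod (z y - x y)" by (simp add: distrib_right)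
      also have "\<dots> < (cmod c + 1) * (e / (cmod c + 1))"
        using d cp by (intro mult_strict_left_mono) auto
      also have "\<dots> = e" using cp by simp
      finally show "cmod (fscale c z y - fscale c x y) < e" .
    qed
  qed
next
  fix x assume x: "x \<in> topspace (strong_dual_top sc D t)"
  then have xX: "x \<in> (cdual sc D t)" using topS by simp
  show "continuous_map euclidean (strong_dual_top sc D t) (\<lambda>c. fscale c x)"
    unfolding continuous_map_def
  proof (intro conjI allI impI)
    show "(\<lambda>c. fscale c x) \<in> topspace euclidean \<rightarrow> topspace (strong_dual_top sc D t)" using cdual_scale xX topS by auto
    fix U assume U: "openin (strong_dual_top sc D t) U"
    have "open {c. fscale c x \<in> U}"
    proof (rule open_contains_ball[THEN iffD2], intro ballI)
      fix c0 assume "c0 \<in> {c. fscale c x \<in> U}"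
      then obtain B e where B: "tvs_bounded sc 0 t B" "e > 0" "{z\<in>(cdual sc D t). \<forall>y\<in>B. cmod (z y - fscale c0 x y) < e} \<subseteq> U"
        using U unfolding openS by blast
      obtain K where K: "K > 0" "\<forall>y\<in>B. cmod (x y) \<le> K" using bounded_on[OF rhs xX B(1)] by blast
      have "ball c0 (e/K) \<subseteq> {c. fscale c x \<in> U}"
      proof
        fix c assume "c \<in> ball c0 (e/K)"
        then have d: "cmod (c - c0) < e/K" by (simp add: dist_norm norm_minus_commute)
        have "fscale c x \<in> {z\<in>(cdual sc D t). \<forall>y\<in>B. cmod (z y - fscale c0 x y) < e}"
        proof (intro CollectI conjI ballI)
          show "fscale c x \<in> (cdual sc D t)" using cdual_scale xX by blast
          fix y assume y: "y \<in> B"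
          have "cmod (fscale c x y - fscale c0 x y) = cmod (c - c0) * cmod (x y)"
            by (simp add: norm_mult[symmetric] left_diff_distrib)
          also have "\<dots> \<le> cmod (c - c0) * K" using K y by (intro mult_left_mono) auto
          also have "\<dots> < (e/K) * K" using d K(1) by (intro mult_strict_right_mono) auto
          also have "\<dots> = e" using K(1) by simp
          finally show "cmod (fscale c x y - fscale c0 x y) < e" .
        qed
        then show "c \<in> {c. fscale c x \<in> U}" using B(3) by auto
      qed
      then show "\<exists>e>0. ball c0 e \<subseteq> {c. fscale c x \<in> U}" using B(2) K(1) by (intro exI[of _ "e/K"]) auto
    qed
    then show "openin euclidean {c \<in> topspace euclidean. fscale c x \<in> U}" by simp
  qed
next
  fix U assume U: "openin (strong_dual_top sc D t) U" and z: "fzero \<in> U"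
  obtain B e where B: "tvs_bounded sc 0 t B" "e > 0" "{z\<in>(cdual sc D t). \<forall>y\<in>B. cmod (z y - fzero y) < e} \<subseteq> U"
    using U z unfolding openS by blast
  define V where "V = {z\<in>(cdual sc D t). \<exists>e'<e. \<forall>y\<in>B. cmod (z y) \<le> e'}"
  have "openin (strong_dual_top sc D t) V"
  proof (subst openS, intro conjI ballI)
    show "V \<subseteq> (cdual sc D t)" unfolding V_def by blast
    fix x assume "x \<in> V"
    then obtain e' where x: "x \<in> (cdual sc D t)" "e' < e" "\<forall>y\<in>B. cmod (x y) \<le> e'" unfolding V_def by blast
    have "{z\<in>(cdual sc D t). \<forall>y\<in>B. cmod (z y - x y) < (e - e')/2} \<subseteq> V"
    proof
      fix z assume z: "z \<in> {z\<in>(cdual sc D t). \<forall>y\<in>B. cmod (z y - x y) < (e - e')/2}"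
      have "\<forall>y\<in>B. cmod (z y) \<le> e' + (e - e')/2"
      proof
        fix y assume y: "y \<in> B"
        have "cmod (z y) \<le> cmod (x y) + cmod (z y - x y)" by (rule norm_triangle_sub)
        also have "\<dots> \<le> e' + (e - e')/2" using x(3) z y by (intro add_mono) auto
        finally show "cmod (z y) \<le> e' + (e - e')/2" .
      qed
      moreover have "e' + (e - e')/2 < e" using x(2) by (simp add: field_simps)
      ultimately show "z \<in> V" unfolding V_def using z by blast
    qed
    then show "\<exists>B. tvs_bounded sc 0 t B \<and> (\<exists>e>0. {z\<in>(cdual sc D t). \<forall>y\<in>B. cmod (z y - x y) < e} \<subseteq> V)"
      using B(1) x(2) by (intro exI[of _ B] conjI exI[of _ "(e - e')/2"]) auto
  qed
  moreover have "fzero \<in> V"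
  proof -
    have "\<forall>y\<in>B. cmod (fzero y) \<le> 0" by simp
    then show ?thesis unfolding V_def using cdual_zero_fun B(2) by blast
  qed
  moreover have "V \<subseteq> U"
  proof
    fix z assume "z \<in> V"
    then obtain e' where "z \<in> (cdual sc D t)" "e' < e" "\<forall>y\<in>B. cmod (z y) \<le> e'" unfolding V_def by blast
    then have "z \<in> {z\<in>(cdual sc D t). \<forall>y\<in>B. cmod (z y - fzero y) < e}" by force
    then show "z \<in> U" using B(3) by blast
  qed
  moreover have "convex_wrt fadd fscale V"
    unfolding convex_wrt_def
  proof (intro ballI allI impI)
    fix x y and u :: real assume "x \<in> V" "y \<in> V" and u: "0 \<le> u \<and> u \<le> 1"
    then obtain e1 e2 where x: "x \<in> (cdual sc D t)" "e1 < e" "\<forall>w\<in>B. cmod (x w) \<le> e1"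
      and y: "y \<in> (cdual sc D t)" "e2 < e" "\<forall>w\<in>B. cmod (y w) \<le> e2" unfolding V_def by blast
    have mem: "fadd (fscale (complex_of_real u) x) (fscale (complex_of_real (1 - u)) y) \<in> (cdual sc D t)"
      using cdual_add cdual_scale x(1) y(1) by blast
    have "\<forall>w\<in>B. cmod (fadd (fscale (complex_of_real u) x) (fscale (complex_of_real (1 - u)) y) w) \<le> max e1 e2"
    proof
      fix w assume w: "w \<in> B"
      have "cmod (fadd (fscale (complex_of_real u) x) (fscale (complex_of_real (1 - u)) y) w)
          \<le> cmod (complex_of_real u * x w) + cmod (complex_of_real (1 - u) * y w)"
        by (simp add: norm_triangle_ineq)
      also have "\<dots> = u * cmod (x w) + (1 - u) * cmod (y w)" using u by (simp only: norm_mult norm_of_real) simp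
      also have "\<dots> \<le> u * max e1 e2 + (1 - u) * max e1 e2"
        using u x(3) y(3) w by (intro add_mono mult_left_mono) auto
      also have "\<dots> = max e1 e2" by (simp add: algebra_simps)
      finally show "cmod (fadd (fscale (complex_of_real u) x) (fscale (complex_of_real (1 - u)) y) w) \<le> max e1 e2" .
    qed
    moreover have "max e1 e2 < e" using x(2) y(2) by simp
    ultimately show "fadd (fscale (complex_of_real u) x) (fscale (complex_of_real (1 - u)) y) \<in> V"
      unfolding V_def using mem by blast
  qed
  ultimately show "\<exists>V. openin (strong_dual_top sc D t) V \<and> fzero \<in> V \<and> V \<subseteq> U \<and> convex_wrt fadd fscale V" by blast
qed

end


theorem proposition2p8:
  fixes sc :: "complex \<Rightarrow> 'a::ab_group_add \<Rightarrow> 'a"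
    and ip :: "'a \<Rightarrow> 'a \<Rightarrow> complex"
    and D :: "'a set" and t :: "'a topology"
    and \<xi> :: "nat \<Rightarrow> 'a" and \<zeta> :: "nat \<Rightarrow> 'a \<Rightarrow> complex"
  assumes rhs: "rigged_hilbert_space sc ip D t"
    and basis: "schauder_basis sc D t \<xi>"
    and zeta_dual: "\<forall>n. \<zeta> n \<in> cdual sc D t"
    and expansion: "\<forall>f\<in>D. limitin t (\<lambda>N. \<Sum>n<N. sc (cnj (\<zeta> n f)) (\<xi> n)) f sequentially"
  shows "(\<forall>\<tau>. compatible_top sc D t \<tau> \<longrightarrow> \<tau> closure_of fspan \<zeta> = cdual sc D t)
       \<and> (reflexive_space sc D t \<longrightarrow>
            strong_dual_top sc D t closure_of fspan \<zeta> = cdual sc D t)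
       \<and> (\<forall>\<Psi>\<in>cdual sc D t. \<forall>f\<in>D. (\<lambda>k. \<Psi> (\<xi> k) * \<zeta> k f) sums \<Psi> f)"
proof (intro conjI allI impI ballI)
  fix \<tau> assume comp: "compatible_top sc D t \<tau>"
  have top: "topspace \<tau> = cdual sc D t" and lc: "lctvs fadd fscale fzero \<tau>"
    using comp unfolding compatible_top_def by blast+
  have iff: "\<And>L. ((\<forall>\<Phi>\<in>cdual sc D t. \<forall>\<Psi>\<in>cdual sc D t. L (fadd \<Phi> \<Psi>) = L \<Phi> + L \<Psi>) \<and>
         (\<forall>c. \<forall>\<Phi>\<in>cdual sc D t. L (fscale c \<Phi>) = c * L \<Phi>) \<and>
         continuous_map \<tau> euclidean L) \<longleftrightarrow> (\<exists>f\<in>D. \<forall>\<Phi>\<in>cdual sc D t. L \<Phi> = \<Phi> f)"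
    using comp unfolding compatible_top_def by blast
  show "\<tau> closure_of fspan \<zeta> = cdual sc D t"
  proof (rule dense_gen[OF lctvs_htvs[OF lc] top rhs basis zeta_dual expansion])
    fix L
    assume "\<forall>\<Phi>\<in>cdual sc D t. \<forall>\<Psi>\<in>cdual sc D t. L (fadd \<Phi> \<Psi>) = L \<Phi> + L \<Psi>"
      "\<forall>c. \<forall>\<Phi>\<in>cdual sc D t. L (fscale c \<Phi>) = c * L \<Phi>" "continuous_map \<tau> euclidean L"
    then show "\<exists>f\<in>D. \<forall>\<Phi>\<in>cdual sc D t. L \<Phi> = \<Phi> f" using iff[of L] by blast
  qed
next
  assume refl: "reflexive_space sc D t"
  have bij: "bij_betw (canon sc D t) D (bidual sc D t)" using refl unfolding reflexive_space_def by blast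
  show "strong_dual_top sc D t closure_of fspan \<zeta> = cdual sc D t"
  proof (rule dense_gen[OF htvs_SDT[OF rhs] topS[OF rhs] rhs basis zeta_dual expansion])
    fix L
    assume La: "\<forall>\<Phi>\<in>cdual sc D t. \<forall>\<Psi>\<in>cdual sc D t. L (fadd \<Phi> \<Psi>) = L \<Phi> + L \<Psi>"
      and Ls: "\<forall>c. \<forall>\<Phi>\<in>cdual sc D t. L (fscale c \<Phi>) = c * L \<Phi>"
      and Lc: "continuous_map (strong_dual_top sc D t) euclidean L"
    define L' where "L' \<Phi> = (if \<Phi> \<in> cdual sc D t then L \<Phi> else 0)" for \<Phi>
    have "L' \<in> bidual sc D t"
      unfolding bidual_def
    proof (intro CollectI conjI ballI allI impI)
      fix \<Phi> \<Psi> assume P: "\<Phi> \<in> cdual sc D t" "\<Psi> \<in> cdual sc D t"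
      have "fadd \<Phi> \<Psi> \<in> cdual sc D t" by (rule cdual_add[OF P])
      then show "L' (fadd \<Phi> \<Psi>) = L' \<Phi> + L' \<Psi>" unfolding L'_def using La P by simp
    next
      fix c \<Phi> assume P: "\<Phi> \<in> cdual sc D t"
      have "fscale c \<Phi> \<in> cdual sc D t" by (rule cdual_scale[OF P])
      then show "L' (fscale c \<Phi>) = c * L' \<Phi>" unfolding L'_def using Ls P by simp
    next
      show "continuous_map (strong_dual_top sc D t) euclidean L'"
        by (rule continuous_map_eq[OF Lc]) (simp add: L'_def topS[OF rhs])
    next
      fix \<Phi> assume "\<Phi> \<notin> cdual sc D t"
      then show "L' \<Phi> = 0" unfolding L'_def by simp
    qed
    then have "L' \<in> canon sc D t ` D" using bij_betw_imp_surj_on[OF bij] by simp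
    then obtain g where g: "g \<in> D" "canon sc D t g = L'" by (elim imageE) simp
    show "\<exists>f\<in>D. \<forall>\<Phi>\<in>cdual sc D t. L \<Phi> = \<Phi> f"
    proof (intro bexI[OF _ g(1)] ballI)
      fix \<Phi> assume P: "\<Phi> \<in> cdual sc D t"
      have "L \<Phi> = L' \<Phi>" unfolding L'_def using P by simp
      also have "\<dots> = canon sc D t g \<Phi>" using g(2) by simp
      also have "\<dots> = \<Phi> g" unfolding canon_def using P by simp
      finally show "L \<Phi> = \<Phi> g" .
    qed
  qed
next
  fix \<Psi> f assume "\<Psi> \<in> cdual sc D t" "f \<in> D"
  then show "(\<lambda>k. \<Psi> (\<xi> k) * \<zeta> k f) sums \<Psi> f"
    using part3[OF rhs basis expansion] by blast
qed


end
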